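(* Assume $\Theta_0\neq\emptyset$. For a menu $\mathcal{F}\subseteq\bar{\mathcal{F}}$ (for which the standing attainment assumption holds), the equality $$\inf_{Q} U(Q,\mathcal{F}) \;=\; \sup_{\mathcal{F}'\subseteq\bar{\mathcal{F}}}\ \inf_{Q} U(Q,\mathcal{F}')$$ (maximin optimality; infima over all probability distributions $Q$ on $\Theta$, suprema over menus $\mathcal{F}'\subseteq\bar{\mathcal{F}}$ satisfying the attainment assumption) holds if and only if the menu $\mathcal{F}$ is incentive-aligned.
   Context: Let $\Theta$ be a set of types partitioned as $\Theta=\Theta_0\sqcup\Theta_1$ (null and nonnull types), and let $(P_\theta)_{\theta\in\Theta}$ be probability distributions on a measurable space $\mathcal{Z}$; $\mathbb{E}_\theta$ denotes expectation with $Z\sim P_\theta$. Fix a cost $C>0$. Fix an ambient class $\bar{\mathcal{F}}$ of measurable functions $f:\mathcal{Z}\to[0,\infty)$ ("license functions") with $\mathbb{E}_\theta[f(Z)]<\infty$ for all $\theta$. A menu is a subset $\mathcal{F}\subseteq\bar{\mathcal{F}}$; it is assumed (attainment assumption) that for every $\theta$, $\sup_{f\in\mathcal{F}}\mathbb{E}_\theta[f(Z)]$ is attained when $\mathcal{F}\ne\emptyset$. Agent behavior: an agent of type $\theta$ offered $\mathcal{F}$ opts in ($I=1$) iff $\mathcal{F}\neq\emptyset$ and $\max_{f\in\mathcal{F}}\mathbb{E}_\theta[f(Z)]>C$, in which case it selects some maximizer $f^{\mathrm{br}}(\cdot;\theta,\mathcal{F})\in\arg\max_{f\in\mathcal{F}}\mathbb{E}_\theta[f(Z)]$;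 otherwise it opts out ($I=0$). The realized license is $L=f^{\mathrm{br}}(Z;\theta,\mathcal{F})$ with $Z\sim P_\theta$. The principal's utility is a function $u:\Theta\times[0,\infty)\to\mathbb{R}$ such that: for $\theta\in\Theta_1$, $u(\theta,\cdot)$ is nondecreasing and $0\le u(\theta,L)\le a_1$ for some constant $a_1<\infty$; for $\theta\in\Theta_0$, $u(\theta,\cdot)$ is nonincreasing, $u(\theta,0)\le 0$ and $u(\theta,L)<0$ for all $L>0$. For a probability distribution $Q$ on $\Theta$, the principal's expected utility is $U(Q,\mathcal{F})=\mathbb{E}_{\theta\sim Q}\big[\mathbb{E}_{Z\sim P_\theta}[u(\theta,L)\cdot I\mid\theta]\big]$ (measurability assumed as needed). A menu $\mathcal{F}$ is incentive-aligned if $\mathbb{E}_\theta[f(Z)]\le C$ for all $\theta\in\Theta_0$ and all $f\in\mathcal{F}$. *)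

theory Defs
  imports "HOL-Probability.Probability"
begin

text \<open>Types are the elements of the type 'th; the null types are those satisfying
  the predicate null (Theta_0), the nonnull ones the rest (Theta_1).
  P th is the distribution of Z for type th. A license function is a
  function 'z => real; a menu is a set of license functions.
  br F th is the agent's selected maximizer (best response) f^br(.;th,F).\<close>

definition attains :: "('th \<Rightarrow> 'z measure) \<Rightarrow> ('z \<Rightarrow> real) set \<Rightarrow> bool" where
  "attains P F \<longleftrightarrow>
     (F \<noteq> {} \<longrightarrow> (\<forall>th. \<exists>f\<in>F. \<forall>g\<in>F. (\<integral>z. g z \<partial>P th) \<le> (\<integral>z. f z \<partial>P th)))"

definition opts_in :: "('th \<Rightarrow> 'z measure) \<Rightarrow> real
     \<Rightarrow> (('z \<Rightarrow> real) set \<Rightarrow> 'th \<Rightarrow> 'z \<Rightarrow> real) \<Rightarrow> ('z \<Rightarrow> real) set \<Rightarrow> 'th \<Rightarrow> bool" where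
  "opts_in P C br F th \<longleftrightarrow> F \<noteq> {} \<and> (\<integral>z. br F th z \<partial>P th) > C"

definition cond_util :: "('th \<Rightarrow> 'z measure) \<Rightarrow> real \<Rightarrow> ('th \<Rightarrow> real \<Rightarrow> real)
     \<Rightarrow> (('z \<Rightarrow> real) set \<Rightarrow> 'th \<Rightarrow> 'z \<Rightarrow> real) \<Rightarrow> ('z \<Rightarrow> real) set \<Rightarrow> 'th \<Rightarrow> real" where
  "cond_util P C u br F th =
     (\<integral>z. u th (br F th z) * (if opts_in P C br F th then 1 else 0) \<partial>P th)"

definition principal_U :: "('th \<Rightarrow> 'z measure) \<Rightarrow> real \<Rightarrow> ('th \<Rightarrow> real \<Rightarrow> real)
     \<Rightarrow> (('z \<Rightarrow> real) set \<Rightarrow> 'th \<Rightarrow> 'z \<Rightarrow> real) \<Rightarrow> 'th measure \<Rightarrow> ('z \<Rightarrow> real) set \<Rightarrow> real" where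
  "principal_U P C u br Q F = (\<integral>th. cond_util P C u br F th \<partial>Q)"

definition maximin_value :: "'th measure \<Rightarrow> ('th \<Rightarrow> 'z measure) \<Rightarrow> real \<Rightarrow> ('th \<Rightarrow> real \<Rightarrow> real)
     \<Rightarrow> (('z \<Rightarrow> real) set \<Rightarrow> 'th \<Rightarrow> 'z \<Rightarrow> real) \<Rightarrow> ('z \<Rightarrow> real) set \<Rightarrow> ereal" where
  "maximin_value MT P C u br F =
     (INF Q\<in>{Q. prob_space Q \<and> sets Q = sets MT}. ereal (principal_U P C u br Q F))"

definition incentive_aligned :: "('th \<Rightarrow> 'z measure) \<Rightarrow> real \<Rightarrow> ('th \<Rightarrow> bool) \<Rightarrow> ('z \<Rightarrow> real) set \<Rightarrow> bool" where
  "incentive_aligned P C null F \<longleftrightarrow> (\<forall>th. null th \<longrightarrow> (\<forall>f\<in>F. (\<integral>z. f z \<partial>P th) \<le> C))"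

end

theory Submission
  imports Defs
begin

theorem theorem2p2:
  fixes MT :: "'th measure" and MZ :: "'z measure"
    and P :: "'th \<Rightarrow> 'z measure" and null :: "'th \<Rightarrow> bool"
    and C a1 :: real and Fbar F :: "('z \<Rightarrow> real) set"
    and u :: "'th \<Rightarrow> real \<Rightarrow> real"
    and br :: "('z \<Rightarrow> real) set \<Rightarrow> 'th \<Rightarrow> 'z \<Rightarrow> real"
  assumes C_pos: "C > 0"
    and MT_space: "space MT = UNIV"
    and P_prob: "\<And>th. prob_space (P th)"
    and P_sets: "\<And>th. sets (P th) = sets MZ"
    and Fbar_nonneg: "\<And>f z. f \<in> Fbar \<Longrightarrow> z \<in> space MZ \<Longrightarrow> f z \<ge> 0"
    and Fbar_meas: "\<And>f. f \<in> Fbar \<Longrightarrow> f \<in> borel_measurable MZ"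
    and Fbar_int: "\<And>f th. f \<in> Fbar \<Longrightarrow> integrable (P th) f"
    and u_nonnull_mono: "\<And>th. \<not> null th \<Longrightarrow> mono_on {0..} (u th)"
    and u_nonnull_bdd: "\<And>th L. \<not> null th \<Longrightarrow> L \<ge> 0 \<Longrightarrow> 0 \<le> u th L \<and> u th L \<le> a1"
    and u_null_anti: "\<And>th. null th \<Longrightarrow> antimono_on {0..} (u th)"
    and u_null_zero: "\<And>th. null th \<Longrightarrow> u th 0 \<le> 0"
    and u_null_neg: "\<And>th L. null th \<Longrightarrow> L > 0 \<Longrightarrow> u th L < 0"
    and u_int: "\<And>th f. f \<in> Fbar \<Longrightarrow> integrable (P th) (\<lambda>z. u th (f z))"
    and br_best: "\<And>F' th. F' \<subseteq> Fbar \<Longrightarrow> attains P F' \<Longrightarrow> F' \<noteq> {} \<Longrightarrow>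
        br F' th \<in> F' \<and> (\<forall>g\<in>F'. (\<integral>z. g z \<partial>P th) \<le> (\<integral>z. br F' th z \<partial>P th))"
    and cond_meas: "\<And>F'. F' \<subseteq> Fbar \<Longrightarrow> attains P F' \<Longrightarrow>
        cond_util P C u br F' \<in> borel_measurable MT"
    and null_nonempty: "\<exists>th. null th"
    and F_sub: "F \<subseteq> Fbar"
    and F_att: "attains P F"
  shows "maximin_value MT P C u br F
           = (SUP F'\<in>{F'. F' \<subseteq> Fbar \<and> attains P F'}. maximin_value MT P C u br F')
         \<longleftrightarrow> incentive_aligned P C null F"
proof -
  obtain th0 where th0: "null th0" using null_nonempty by blast
  have spP: "\<And>th. space (P th) = space MZ" using P_sets sets_eq_imp_space_eq by blast
  let ?QS = "{Q. prob_space Q \<and> sets Q = sets MT}"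
  have retQ: "\<And>th. return MT th \<in> ?QS"
    by (simp add: prob_space_return MT_space)
  have U_ret: "\<And>F'. F' \<subseteq> Fbar \<Longrightarrow> attains P F' \<Longrightarrow>
      principal_U P C u br (return MT th) F' = cond_util P C u br F' th" for th
    unfolding principal_U_def using cond_meas by (simp add: integral_return MT_space)
  have mm_le: "\<And>F'. F' \<subseteq> Fbar \<Longrightarrow> attains P F' \<Longrightarrow>
      maximin_value MT P C u br F' \<le> ereal (cond_util P C u br F' th)" for th
    unfolding maximin_value_def
    by (metis (no_types, lifting) INF_lower U_ret retQ)
  have null_nonpos: "cond_util P C u br F' th \<le> 0" if "F' \<subseteq> Fbar" "attains P F'" "null th" for F' th
  proof (cases "opts_in P C br F' th")
    case False
    then show ?thesis by (simp add: cond_util_def)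
  next
    case True
    then have ne: "F' \<noteq> {}" by (simp add: opts_in_def)
    then have brF: "br F' th \<in> Fbar" using br_best that by blast
    have "\<forall>z\<in>space (P th). 0 \<le> - (u th (br F' th z) * (if opts_in P C br F' th then 1 else 0))"
    proof
      fix z assume "z \<in> space (P th)"
      then have "br F' th z \<ge> 0" using Fbar_nonneg brF spP by auto
      then have "u th (br F' th z) \<le> 0" using u_null_zero u_null_neg that(3)
        by (metis less_eq_real_def order.strict_iff_not)
      then show "0 \<le> - (u th (br F' th z) * (if opts_in P C br F' th then 1 else 0))" by simp
    qed
    then have "0 \<le> (\<integral>z. - (u th (br F' th z) * (if opts_in P C br F' th then 1 else 0)) \<partial>P th)"
      by (intro Bochner_Integration.integral_nonneg) blast
    then show ?thesis unfolding cond_util_def by simp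
  qed
  have mm_nonpos: "maximin_value MT P C u br F' \<le> 0" if "F' \<subseteq> Fbar" "attains P F'" for F'
    using mm_le[OF that, of th0] null_nonpos[OF that th0] by (simp add: order_trans)
  have empty_att: "attains P {}" by (simp add: attains_def)
  have mm_empty: "maximin_value MT P C u br {} = 0"
  proof -
    have "\<And>Q. principal_U P C u br Q {} = 0"
      by (simp add: principal_U_def cond_util_def opts_in_def)
    moreover have "?QS \<noteq> {}" using retQ by blast
    ultimately show ?thesis unfolding maximin_value_def by simp
  qed
  have sup0: "(SUP F'\<in>{F'. F' \<subseteq> Fbar \<and> attains P F'}. maximin_value MT P C u br F') = 0"
  proof (rule antisym)
    show "(SUP F'\<in>{F'. F' \<subseteq> Fbar \<and> attains P F'}. maximin_value MT P C u br F') \<le> 0"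
      using mm_nonpos by (auto intro: SUP_least)
    show "0 \<le> (SUP F'\<in>{F'. F' \<subseteq> Fbar \<and> attains P F'}. maximin_value MT P C u br F')"
      using empty_att mm_empty
      by (metis (mono_tags, lifting) SUP_upper empty_subsetI mem_Collect_eq)
  qed
  show ?thesis
  proof
    assume eq: "maximin_value MT P C u br F
           = (SUP F'\<in>{F'. F' \<subseteq> Fbar \<and> attains P F'}. maximin_value MT P C u br F')"
    show "incentive_aligned P C null F"
      unfolding incentive_aligned_def
    proof (rule ccontr)
      assume "\<not> (\<forall>th. null th \<longrightarrow> (\<forall>f\<in>F. (\<integral>z. f z \<partial>P th) \<le> C))"
      then obtain th f where nth: "null th" and fF: "f \<in> F" and fC: "(\<integral>z. f z \<partial>P th) > C"
        by force
      have ne: "F \<noteq> {}" using fF by blast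
      have brF: "br F th \<in> F" and brmax: "(\<integral>z. f z \<partial>P th) \<le> (\<integral>z. br F th z \<partial>P th)"
        using br_best[OF F_sub F_att ne, of th] fF by auto
      have brFb: "br F th \<in> Fbar" using brF F_sub by blast
      have opt: "opts_in P C br F th" using ne fC brmax by (simp add: opts_in_def)
      let ?g = "\<lambda>z. - u th (br F th z)"
      have cu: "cond_util P C u br F th = - (\<integral>z. ?g z \<partial>P th)"
        using opt by (simp add: cond_util_def)
      have gint: "integrable (P th) ?g" using u_int[OF brFb] by simp
      have brnn: "\<And>z. z \<in> space (P th) \<Longrightarrow> br F th z \<ge> 0" using Fbar_nonneg brFb spP by auto
      have gnn: "\<And>z. z \<in> space (P th) \<Longrightarrow> 0 \<le> ?g z"
        using brnn u_null_zero u_null_neg nth by (metis less_eq_real_def neg_0_le_iff_le)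
      have "(\<integral>z. ?g z \<partial>P th) > 0"
      proof (rule ccontr)
        assume "\<not> (\<integral>z. ?g z \<partial>P th) > 0"
        moreover have "(\<integral>z. ?g z \<partial>P th) \<ge> 0" using gnn by (intro Bochner_Integration.integral_nonneg) blast
        ultimately have "(\<integral>z. ?g z \<partial>P th) = 0" by simp
        then have "AE z in P th. ?g z = 0"
          using integral_nonneg_eq_0_iff_AE[OF gint] gnn by (simp add: AE_I2)
        then have ae: "AE z in P th. br F th z = 0"
        proof (rule AE_mp, intro AE_I2 impI)
          fix z assume "z \<in> space (P th)" "?g z = 0"
          then show "br F th z = 0" using brnn[of z] u_null_neg[OF nth, of "br F th z"] by force
        qed
        have bm: "br F th \<in> borel_measurable (P th)"
          using Fbar_meas[OF brFb] measurable_cong_sets[OF P_sets[of th] refl, where N="borel::real measure"] by simp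
        have "(\<integral>z. br F th z \<partial>P th) = (\<integral>z. 0 \<partial>P th)"
          by (rule integral_cong_AE) (use ae bm in \<open>auto\<close>)
        then show False using fC brmax C_pos by simp
      qed
      then have "cond_util P C u br F th < 0" using cu by simp
      then have "ereal (cond_util P C u br F th) < 0" by simp
      then have "maximin_value MT P C u br F < 0"
        using mm_le[OF F_sub F_att, of th] by (rule order.strict_trans1[rotated])
      then show False using eq sup0 by simp
    qed
  next
    assume ia: "incentive_aligned P C null F"
    have cnn: "cond_util P C u br F th \<ge> 0" for th
    proof (cases "opts_in P C br F th")
      case False
      then show ?thesis by (simp add: cond_util_def)
    next
      case True
      then have ne: "F \<noteq> {}" and gt: "(\<integral>z. br F th z \<partial>P th) > C" by (auto simp: opts_in_def)
      have brF: "br F th \<in> F" using br_best[OF F_sub F_att ne] by blast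
      then have brFb: "br F th \<in> Fbar" using F_sub by blast
      have nn: "\<not> null th" using ia brF gt unfolding incentive_aligned_def by force
      show ?thesis unfolding cond_util_def
        using True Fbar_nonneg[OF brFb] spP u_nonnull_bdd[OF nn]
        by (intro Bochner_Integration.integral_nonneg) auto
    qed
    have "0 \<le> maximin_value MT P C u br F"
      unfolding maximin_value_def principal_U_def
      using cnn by (auto intro!: INF_greatest Bochner_Integration.integral_nonneg)
    then show "maximin_value MT P C u br F
           = (SUP F'\<in>{F'. F' \<subseteq> Fbar \<and> attains P F'}. maximin_value MT P C u br F')"
      using sup0 mm_nonpos[OF F_sub F_att] by simp
  qed
qed

end
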